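(* Let $P$ be the program NQUEENS. Then $S^0\subseteq\mathcal{M}_P$; that is, NQUEENS is complete with respect to $S^0$. Consequently NQUEENS is also complete with respect to $S^0_{pqs}$ (i.e. $S^0_{pqs}\subseteq\mathcal{M}_P$).
   Context: Terms are built over a fixed alphabet containing the constant $0$, the unary symbol $s$, the list constant $[\,]$ and the binary list constructor $[\cdot|\cdot]$; $\mathcal{HU}$ is the set of ground terms and $\mathcal{HB}$ the set of ground atoms. A natural number $i$ is identified with the term $s^i(0)$. Prolog list notation is used: $[e_1,\dots,e_n|e]$ stands for $e$ when $n=0$, and a list of length $n$ is a term $[e_1,\dots,e_n]$. A term $e$ is the $k$-th member of a term $t$ ($k\ge 1$) if $t=[e_1,\dots,e_{k-1},e|e']$ for some terms $e_1,\dots,e_{k-1},e'$; $e$ is a member of $t$ if it is its $k$-th member for some $k$. A list of distinct members is a list whose elements are pairwise distinct. The program NQUEENS consists of the definite clauses (capitalized names are variables): (C1) $pqs(0,X_1,X_2,X_3)$. (C2) $pqs(s(I),Cs,Us,[X|Ds]) \gets pqs(I,Cs,[Y|Us],Ds),\ pq(s(I),Cs,Us,Ds)$. (C3) $pq(I,[I|X_1],[I|X_2],[I|X_3])$. (C4) $pq(I,[X_1|Cs],[X_2|Us],[X_3|Ds]) \gets pq(I,Cs,Us,Ds)$. $\mathcal{M}_P$ denotes the least Herbrand model of a program $P$. If a number $j$ is the $k$-th member of a list $cs$, the up-diagonal number of $j$ w.r.t. $i$ in $cs$ is $k+j-i$ and the down-diagonal number is $k+i-j$. A triple $(cs,us,ds)$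 of terms is correct up to $m$ w.r.t. $i$ when $0\le m\le i$ and: $cs$ is a list of distinct members and each $j\in\{1,\dots,m\}$ is a member of $cs$; the up-diagonal numbers of $1,\dots,m$ in $cs$ are pairwise distinct, and likewise the down-diagonal numbers; and for each $j\in\{1,\dots,m\}$, if the up-diagonal (resp. down-diagonal) number of $j$ w.r.t. $i$ in $cs$ is $l>0$, then the $l$-th member of $us$ (resp. $ds$) is $j$. Specifications: $S_{pq}=\{pq(i,[c_1,\dots,c_k,i|c],[u_1,\dots,u_k,i|u],[d_1,\dots,d_k,i|d])\in\mathcal{HB}\mid k\ge0\}$; $S^0_{pqs}=\{pqs(i,cs,us,[t|ds])\in\mathcal{HB}\mid i>0$ a natural number and $(cs,us,ds)$ is correct up to $i$ w.r.t. $i\}$; $S^0=S_{pq}\cup S^0_{pqs}\cup\{pqs(0,cs,us,ds)\mid cs,us,ds\in\mathcal{HU}\}$. *)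

theory Defs
  imports Main
begin

datatype gterm = Zero | S gterm | Nil | Cons gterm gterm

datatype gatom = Pqs gterm gterm gterm gterm | Pq gterm gterm gterm gterm

definition num :: "nat \<Rightarrow> gterm" where
  "num i = (S ^^ i) Zero"

text \<open>Prolog list notation [e1,...,en|e].\<close>
fun lst :: "gterm list \<Rightarrow> gterm \<Rightarrow> gterm" where
  "lst [] e = e"
| "lst (x # xs) e = Cons x (lst xs e)"

definition kth_member :: "gterm \<Rightarrow> nat \<Rightarrow> gterm \<Rightarrow> bool" where
  "kth_member t k e \<longleftrightarrow> k \<ge> 1 \<and> (\<exists>es e'. length es = k - 1 \<and> t = lst es (Cons e e'))"

definition is_member :: "gterm \<Rightarrow> gterm \<Rightarrow> bool" where
  "is_member t e \<longleftrightarrow> (\<exists>k. kth_member t k e)"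

definition distinct_list :: "gterm \<Rightarrow> bool" where
  "distinct_list t \<longleftrightarrow> (\<exists>es. t = lst es Nil \<and> distinct es)"

text \<open>The least Herbrand model is the least set of ground atoms closed under all
  ground instances of the clauses C1--C4.\<close>
inductive_set MP :: "gatom set" where
  C1: "Pqs Zero x1 x2 x3 \<in> MP"
| C2: "\<lbrakk> Pqs i cs (Cons y us) ds \<in> MP; Pq (S i) cs us ds \<in> MP \<rbrakk>
       \<Longrightarrow> Pqs (S i) cs us (Cons x ds) \<in> MP"
| C3: "Pq i (Cons i x1) (Cons i x2) (Cons i x3) \<in> MP"
| C4: "Pq i cs us ds \<in> MP \<Longrightarrow> Pq i (Cons x1 cs) (Cons x2 us) (Cons x3 ds) \<in> MP"

text \<open>(cs,us,ds) is correct up to m w.r.t. i.  Up-diagonal number of j (k-th member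
  of cs) is k+j-i, down-diagonal number is k+i-j (integers).\<close>
definition correct_upto :: "gterm \<Rightarrow> gterm \<Rightarrow> gterm \<Rightarrow> nat \<Rightarrow> nat \<Rightarrow> bool" where
  "correct_upto cs us ds m i \<longleftrightarrow>
     m \<le> i \<and>
     distinct_list cs \<and>
     (\<forall>j\<in>{1..m}. is_member cs (num j)) \<and>
     (\<forall>j1\<in>{1..m}. \<forall>j2\<in>{1..m}. \<forall>k1 k2.
        j1 \<noteq> j2 \<and> kth_member cs k1 (num j1) \<and> kth_member cs k2 (num j2) \<longrightarrow>
          int k1 + int j1 - int i \<noteq> int k2 + int j2 - int i) \<and>
     (\<forall>j1\<in>{1..m}. \<forall>j2\<in>{1..m}. \<forall>k1 k2.
        j1 \<noteq> j2 \<and> kth_member cs k1 (num j1) \<and> kth_member cs k2 (num j2) \<longrightarrow>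
          int k1 + int i - int j1 \<noteq> int k2 + int i - int j2) \<and>
     (\<forall>j\<in>{1..m}. \<forall>k. kth_member cs k (num j) \<longrightarrow>
        (int k + int j - int i > 0 \<longrightarrow> kth_member us (nat (int k + int j - int i)) (num j)) \<and>
        (int k + int i - int j > 0 \<longrightarrow> kth_member ds (nat (int k + int i - int j)) (num j)))"

definition S_pq :: "gatom set" where
  "S_pq = {Pq i (lst cs (Cons i c)) (lst us (Cons i u)) (lst ds (Cons i d)) | i cs us ds c u d.
             length cs = length us \<and> length us = length ds}"

definition S0_pqs :: "gatom set" where
  "S0_pqs = {Pqs (num i) cs us (Cons t ds) | i cs us ds t. i > 0 \<and> correct_upto cs us ds i i}"

definition S0 :: "gatom set" where
  "S0 = S_pq \<union> S0_pqs \<union> {Pqs Zero cs us ds | cs us ds. True}"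

end

theory Submission
  imports Defs
begin

lemma km_ge1: "kth_member t k e \<Longrightarrow> k \<ge> 1"
  unfolding kth_member_def by auto

lemma km_Cons1: "kth_member (Cons a t) (Suc 0) e \<longleftrightarrow> e = a"
  unfolding kth_member_def by auto

lemma km_Cons_Suc: "k \<ge> 1 \<Longrightarrow> kth_member (Cons a t) (Suc k) e \<longleftrightarrow> kth_member t k e"
proof
  assume k: "k \<ge> 1" and h: "kth_member (Cons a t) (Suc k) e"
  then obtain es e' where es: "length es = k" "Cons a t = lst es (Cons e e')"
    unfolding kth_member_def by auto
  then obtain b es' where "es = b # es'" using k by (cases es) auto
  then show "kth_member t k e" using es k unfolding kth_member_def by auto
next
  assume k: "k \<ge> 1" and h: "kth_member t k e"
  then obtain es e' where es: "length es = k - 1" "t = lst es (Cons e e')"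
    unfolding kth_member_def by auto
  then show "kth_member (Cons a t) (Suc k) e" unfolding kth_member_def using k
    by (intro conjI exI[of _ "a # es"] exI[of _ e']) auto
qed

lemma km_cons_ex: "kth_member t k e \<Longrightarrow> \<exists>a t'. t = Cons a t'"
  unfolding kth_member_def by (auto, case_tac es, auto)

lemma pq_lemma: "kth_member cs k e \<Longrightarrow> kth_member us k e \<Longrightarrow> kth_member ds k e
   \<Longrightarrow> Pq e cs us ds \<in> MP"
proof (induction k arbitrary: cs us ds)
  case 0 then show ?case using km_ge1 by fastforce
next
  case (Suc k)
  obtain a cs' where c: "cs = Cons a cs'" using km_cons_ex[OF Suc.prems(1)] by blast
  obtain b us' where u: "us = Cons b us'" using km_cons_ex[OF Suc.prems(2)] by blast
  obtain d ds' where d: "ds = Cons d ds'" using km_cons_ex[OF Suc.prems(3)] by blast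
  show ?case
  proof (cases k)
    case 0
    then show ?thesis using Suc.prems c u d km_Cons1 MP.C3 by auto
  next
    case (Suc k')
    then have "k \<ge> 1" by simp
    then have "kth_member cs' k e" "kth_member us' k e" "kth_member ds' k e"
      using Suc.prems c u d km_Cons_Suc by auto
    then show ?thesis using Suc.IH c u d MP.C4 by auto
  qed
qed

lemma Spq_sub: "length cs = length us \<Longrightarrow> length us = length ds \<Longrightarrow>
  Pq i (lst cs (Cons i c)) (lst us (Cons i u)) (lst ds (Cons i d)) \<in> MP"
proof (induction cs arbitrary: us ds)
  case Nil then show ?case using MP.C3 by simp
next
  case (Cons a cs)
  then obtain b us' d' ds' where "us = b # us'" "ds = d' # ds'"
    by (cases us; cases ds) auto
  then show ?case using Cons MP.C4 by auto
qed

lemma num_Suc: "num (Suc n) = S (num n)" unfolding num_def by simp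
lemma num_0: "num 0 = Zero" unfolding num_def by simp

lemma main_pqs: "correct_upto cs us ds i i \<Longrightarrow> Pqs (num i) cs us (Cons t ds) \<in> MP"
proof (induction i arbitrary: cs us ds t)
  case 0 then show ?case using MP.C1 num_0 by simp
next
  case (Suc n)
  have dl: "distinct_list cs" and mem: "\<forall>j\<in>{1..Suc n}. is_member cs (num j)"
   and up: "\<forall>j1\<in>{1..Suc n}. \<forall>j2\<in>{1..Suc n}. \<forall>k1 k2.
        j1 \<noteq> j2 \<and> kth_member cs k1 (num j1) \<and> kth_member cs k2 (num j2) \<longrightarrow>
          int k1 + int j1 - int (Suc n) \<noteq> int k2 + int j2 - int (Suc n)"
   and dn: "\<forall>j1\<in>{1..Suc n}. \<forall>j2\<in>{1..Suc n}. \<forall>k1 k2.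
        j1 \<noteq> j2 \<and> kth_member cs k1 (num j1) \<and> kth_member cs k2 (num j2) \<longrightarrow>
          int k1 + int (Suc n) - int j1 \<noteq> int k2 + int (Suc n) - int j2"
   and lst: "\<forall>j\<in>{1..Suc n}. \<forall>k. kth_member cs k (num j) \<longrightarrow>
        (int k + int j - int (Suc n) > 0 \<longrightarrow> kth_member us (nat (int k + int j - int (Suc n))) (num j)) \<and>
        (int k + int (Suc n) - int j > 0 \<longrightarrow> kth_member ds (nat (int k + int (Suc n) - int j)) (num j))"
    using Suc.prems unfolding correct_upto_def by blast+
  obtain k where k: "kth_member cs k (num (Suc n))"
    using mem unfolding is_member_def by fastforce
  have k1: "k \<ge> 1" using km_ge1[OF k] .
  have "kth_member us k (num (Suc n))" "kth_member ds k (num (Suc n))"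
    using lst[rule_format, of "Suc n" k] k k1 by auto
  then have PQ: "Pq (num (Suc n)) cs us ds \<in> MP" using pq_lemma k by blast
  define y where "y = num (SOME j. j \<in> {1..n} \<and> (\<exists>k. kth_member cs k (num j) \<and> int k + int j = int (Suc n)))"
  have PQS: "Pqs (num n) cs (Cons y us) ds \<in> MP"
  proof (cases n)
    case 0 then show ?thesis using MP.C1 num_0 by simp
  next
    case (Suc n')
    then have n1: "n \<ge> 1" by simp
    obtain kn where kn: "kth_member cs kn (num n)"
      using mem n1 unfolding is_member_def by fastforce
    have "kth_member ds (nat (int kn + int (Suc n) - int n)) (num n)"
      using lst[rule_format, of n kn] kn n1 by auto
    then obtain t' ds' where dsd: "ds = Cons t' ds'" using km_cons_ex by blast
    have "correct_upto cs (Cons y us) ds' n n"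
      unfolding correct_upto_def
    proof (intro conjI ballI allI impI)
      show "n \<le> n" by simp
      show "distinct_list cs" by fact
    next
      fix j assume "j \<in> {1..n}" then show "is_member cs (num j)" using mem by auto
    next
      fix j1 j2 k1 k2 assume "j1 \<in> {1..n}" "j2 \<in> {1..n}"
        "j1 \<noteq> j2 \<and> kth_member cs k1 (num j1) \<and> kth_member cs k2 (num j2)"
      then show "int k1 + int j1 - int n \<noteq> int k2 + int j2 - int n"
        using up[rule_format, of j1 j2 k1 k2] by auto
    next
      fix j1 j2 k1 k2 assume "j1 \<in> {1..n}" "j2 \<in> {1..n}"
        "j1 \<noteq> j2 \<and> kth_member cs k1 (num j1) \<and> kth_member cs k2 (num j2)"
      then show "int k1 + int n - int j1 \<noteq> int k2 + int n - int j2"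
        using dn[rule_format, of j1 j2 k1 k2] by auto
    next
      fix j kk assume j: "j \<in> {1..n}" and kk: "kth_member cs kk (num j)"
        and pos: "0 < int kk + int j - int n"
      show "kth_member (Cons y us) (nat (int kk + int j - int n)) (num j)"
      proof (cases "int kk + int j - int (Suc n) > 0")
        case True
        then have "kth_member us (nat (int kk + int j - int (Suc n))) (num j)"
          using lst[rule_format, of j kk] j kk by auto
        moreover have "nat (int kk + int j - int n) = Suc (nat (int kk + int j - int (Suc n)))"
          using True by auto
        ultimately show ?thesis using km_Cons_Suc True by auto
      next
        case False
        then have eq: "int kk + int j = int (Suc n)" using pos by auto
        have ex: "\<exists>j. j \<in> {1..n} \<and> (\<exists>k. kth_member cs k (num j) \<and> int k + int j = int (Suc n))"
          using j kk eq by blast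
        obtain j0 where j0: "j0 \<in> {1..n}" "\<exists>k. kth_member cs k (num j0) \<and> int k + int j0 = int (Suc n)"
          and y: "y = num j0"
          using someI_ex[OF ex] unfolding y_def by blast
        have "j0 = j"
        proof (rule ccontr)
          assume "j0 \<noteq> j"
          then show False using j0 up[rule_format, of j0 j] j kk eq by force
        qed
        then show ?thesis using y eq km_Cons1 by (simp add: nat_int_add)
      qed
    next
      fix j kk assume j: "j \<in> {1..n}" and kk: "kth_member cs kk (num j)"
        and pos: "0 < int kk + int n - int j"
      have "kth_member ds (nat (int kk + int (Suc n) - int j)) (num j)"
        using lst[rule_format, of j kk] j kk pos by auto
      moreover have "nat (int kk + int (Suc n) - int j) = Suc (nat (int kk + int n - int j))"
        using pos by auto
      ultimately show "kth_member ds' (nat (int kk + int n - int j)) (num j)"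
        using km_Cons_Suc dsd pos by auto
    qed
    then show ?thesis using Suc.IH dsd by blast
  qed
  show ?case using MP.C2[OF PQS, of t] PQ by (simp add: num_Suc)
qed

theorem mainTheorem5:
  shows "S0 \<subseteq> MP \<and> S0_pqs \<subseteq> MP"
proof -
  have a: "S0_pqs \<subseteq> MP" unfolding S0_pqs_def using main_pqs by auto
  have b: "S_pq \<subseteq> MP" unfolding S_pq_def using Spq_sub by auto
  have c: "{Pqs Zero cs us ds | cs us ds. True} \<subseteq> MP" using MP.C1 by auto
  show ?thesis using a b c unfolding S0_def by auto
qed

end
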